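(* Let $m,d\in\mathbb N$. Let $G$ be an $m$-joined graph and let $W\subseteq V(G)$ satisfy $|W|\ge (3d+4)m$. Then there is a set $B\subseteq V(G)$ with $|B|\le m$ such that every $U\subseteq V(G)\setminus B$ with $|U|\le 2m$ satisfies $|N(U,W\setminus B)|\ge d|U|$.
   Context: A graph $G$ is $m$-joined if there is an edge between any two disjoint vertex sets each containing at least $m$ vertices. For $U\subseteq V(G)$, $N(U)=\big(\bigcup_{u\in U}N(u)\big)\setminus U$ is the exterior neighbourhood, and $N(U,W)=N(U)\cap W$. *)

theory Defs
  imports Main
begin

definition simple_graph :: "'a set \<Rightarrow> ('a \<Rightarrow> 'a \<Rightarrow> bool) \<Rightarrow> bool" where
  "simple_graph V E \<longleftrightarrow> finite V \<and> (\<forall>u v. E u v \<longrightarrow> u \<in> V \<and> v \<in> V)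
     \<and> (\<forall>u v. E u v \<longrightarrow> E v u) \<and> (\<forall>v. \<not> E v v)"

definition m_joined :: "'a set \<Rightarrow> ('a \<Rightarrow> 'a \<Rightarrow> bool) \<Rightarrow> nat \<Rightarrow> bool" where
  "m_joined V E m \<longleftrightarrow> (\<forall>A B. A \<subseteq> V \<longrightarrow> B \<subseteq> V \<longrightarrow> A \<inter> B = {} \<longrightarrow>
      card A \<ge> m \<longrightarrow> card B \<ge> m \<longrightarrow> (\<exists>a\<in>A. \<exists>b\<in>B. E a b))"

definition ext_nbhd :: "('a \<Rightarrow> 'a \<Rightarrow> bool) \<Rightarrow> 'a set \<Rightarrow> 'a set" where
  "ext_nbhd E U = (\<Union>u\<in>U. {v. E u v}) - U"

definition nbhd_in :: "('a \<Rightarrow> 'a \<Rightarrow> bool) \<Rightarrow> 'a set \<Rightarrow> 'a set \<Rightarrow> 'a set" where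
  "nbhd_in E U W = ext_nbhd E U \<inter> W"

end

theory Submission
  imports Defs
begin

lemma nb_union:
  "nbhd_in E (B \<union> U) (W - (B \<union> U)) \<subseteq> nbhd_in E B (W - B) \<union> nbhd_in E U (W - B)"
  unfolding nbhd_in_def ext_nbhd_def by auto

lemma nb_big:
  assumes "simple_graph V E" "m_joined V E m" "W \<subseteq> V" "S \<subseteq> V" "card S \<ge> m"
  shows "card (W - S) < card (nbhd_in E S (W - S)) + m"
proof -
  have fin: "finite V" using assms(1) unfolding simple_graph_def by auto
  define R where "R = W - S - nbhd_in E S (W - S)"
  have "card R < m"
  proof (rule ccontr)
    assume "\<not> card R < m"
    hence "card R \<ge> m" by simp
    moreover have "R \<subseteq> V" "S \<inter> R = {}" using assms(3) unfolding R_def by auto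
    ultimately obtain a b where "a \<in> S" "b \<in> R" "E a b"
      using assms(2,4,5) unfolding m_joined_def by blast
    thus False unfolding R_def nbhd_in_def ext_nbhd_def by auto
  qed
  have "W - S \<subseteq> nbhd_in E S (W - S) \<union> R" unfolding R_def by auto
  moreover have "finite (nbhd_in E S (W - S))" "finite R"
    using fin assms(3) unfolding R_def nbhd_in_def by (auto intro: finite_subset)
  ultimately have "card (W - S) \<le> card (nbhd_in E S (W - S)) + card R"
    by (meson card_Un_le card_mono finite_UnI le_trans)
  thus ?thesis using \<open>card R < m\<close> by linarith
qed

theorem proposition3p35:
  fixes V :: "'a set" and E :: "'a \<Rightarrow> 'a \<Rightarrow> bool" and m d :: nat and W :: "'a set"
  assumes "simple_graph V E" and "m_joined V E m"
    and "W \<subseteq> V" and "card W \<ge> (3 * d + 4) * m"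
  shows "\<exists>B. B \<subseteq> V \<and> card B \<le> m \<and>
           (\<forall>U. U \<subseteq> V - B \<longrightarrow> card U \<le> 2 * m \<longrightarrow>
                card (nbhd_in E U (W - B)) \<ge> d * card U)"
proof -
  have fin: "finite V" using assms(1) unfolding simple_graph_def by auto
  define S where "S = {B. B \<subseteq> V \<and> card B \<le> m \<and> card (nbhd_in E B (W - B)) \<le> d * card B}"
  have "{} \<in> S" unfolding S_def nbhd_in_def ext_nbhd_def by auto
  have finS: "finite S"
  proof (rule finite_subset)
    show "S \<subseteq> Pow V" unfolding S_def by auto
  qed (use fin in auto)
  define k where "k = Max (card ` S)"
  have "k \<in> card ` S" unfolding k_def using finS \<open>{} \<in> S\<close> by (intro Max_in) auto
  then obtain B where B: "B \<in> S" "card B = k" by auto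
  have maxk: "\<And>B'. B' \<in> S \<Longrightarrow> card B' \<le> k" unfolding k_def using finS by auto
  have BV: "B \<subseteq> V" "card B \<le> m" "card (nbhd_in E B (W - B)) \<le> d * card B"
    using B unfolding S_def by auto
  show ?thesis
  proof (intro exI[of _ B] conjI allI impI BV)
    fix U assume U: "U \<subseteq> V - B" "card U \<le> 2 * m"
    show "card (nbhd_in E U (W - B)) \<ge> d * card U"
    proof (rule ccontr)
      assume lt: "\<not> ?thesis"
      define B' where "B' = B \<union> U"
      have finB: "finite B" "finite U" using fin BV(1) U(1) by (auto intro: finite_subset)
      have cB': "card B' = card B + card U" unfolding B'_def
        using finB U(1) by (subst card_Un_disjoint) auto
      have "U \<noteq> {}" using lt by auto
      hence "card U > 0" using finB by auto
      have fn: "finite (nbhd_in E B (W - B))" "finite (nbhd_in E U (W - B))"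
        using fin assms(3) unfolding nbhd_in_def by (auto intro: finite_subset)
      have "card (nbhd_in E B' (W - B')) \<le> card (nbhd_in E B (W - B) \<union> nbhd_in E U (W - B))"
        unfolding B'_def using fn by (intro card_mono nb_union) auto
      also have "\<dots> \<le> card (nbhd_in E B (W - B)) + card (nbhd_in E U (W - B))"
        by (rule card_Un_le)
      finally have nb: "card (nbhd_in E B' (W - B')) < d * card B'"
        using lt BV(3) cB' by (simp add: add_mult_distrib2)
      have B'V: "B' \<subseteq> V" using BV(1) U(1) unfolding B'_def by auto
      show False
      proof (cases "card B' \<le> m")
        case True
        hence "B' \<in> S" unfolding S_def using B'V nb by auto
        hence "card B' \<le> k" by (rule maxk)
        thus False using cB' B(2) \<open>card U > 0\<close> by simp
      next
        case False
        have "card (W - B') < card (nbhd_in E B' (W - B')) + m"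
          using nb_big[OF assms(1,2,3) B'V] False by simp
        moreover have "card W \<le> card (W - B') + card B'"
        proof -
          have "finite ((W - B') \<union> B')" using fin assms(3) B'V by (auto intro: finite_subset)
          hence "card W \<le> card ((W - B') \<union> B')" by (intro card_mono) auto
          also have "\<dots> \<le> card (W - B') + card B'" by (rule card_Un_le)
          finally show ?thesis .
        qed
        moreover have "card B' \<le> 3 * m" using cB' BV(2) U(2) by simp
        moreover have "d * card B' \<le> d * (3 * m)" using \<open>card B' \<le> 3 * m\<close> by simp
        moreover have "(3 * d + 4) * m = d * (3 * m) + 4 * m" by (simp add: algebra_simps)
        ultimately show False using nb assms(4) False by linarith
      qed
    qed
  qed
qed

end
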